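(* Let $n\ge 1$, let $T$ be a regular tournament on $2n+1$ vertices (every vertex has in-degree and out-degree $n$), and let $G$ be the hairy tournament obtained from $T$ by attaching to each vertex $a$ of $T$ exactly $2n+1$ new vertices, each having exactly one incident edge, directed from $a$ to it. Then $|V(G)|=(2n+2)(2n+1)$ and the minimum size of a quasi-kernel of $G$ is $1+n(2n+1)$.
   Context: Digraphs are finite, without loops and without multiple edges in the same direction. For $V'\subseteq V(G)$, $\Gamma^+(V')$ is the set of out-neighbours of vertices of $V'$ and $\Gamma^+_2(V')=V'\cup\Gamma^+(V')\cup\Gamma^+(\Gamma^+(V'))$. A quasi-kernel is an independent set $Q$ with $\Gamma^+_2(Q)=V(G)$. *)

theory Defs
  imports Main
begin

definition digraph :: "'v set \<Rightarrow> ('v \<Rightarrow> 'v \<Rightarrow> bool) \<Rightarrow> bool" where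
  "digraph V E \<longleftrightarrow> finite V \<and> (\<forall>x y. E x y \<longrightarrow> x \<in> V \<and> y \<in> V) \<and> (\<forall>x. \<not> E x x)"

definition out_nbrs :: "'v set \<Rightarrow> ('v \<Rightarrow> 'v \<Rightarrow> bool) \<Rightarrow> 'v set \<Rightarrow> 'v set" where
  "out_nbrs V E S = {y \<in> V. \<exists>x\<in>S. E x y}"

definition Gamma2 :: "'v set \<Rightarrow> ('v \<Rightarrow> 'v \<Rightarrow> bool) \<Rightarrow> 'v set \<Rightarrow> 'v set" where
  "Gamma2 V E S = S \<union> out_nbrs V E S \<union> out_nbrs V E (out_nbrs V E S)"

definition independent :: "'v set \<Rightarrow> ('v \<Rightarrow> 'v \<Rightarrow> bool) \<Rightarrow> 'v set \<Rightarrow> bool" where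
  "independent V E Q \<longleftrightarrow> Q \<subseteq> V \<and> (\<forall>x\<in>Q. \<forall>y\<in>Q. \<not> E x y)"

definition quasi_kernel :: "'v set \<Rightarrow> ('v \<Rightarrow> 'v \<Rightarrow> bool) \<Rightarrow> 'v set \<Rightarrow> bool" where
  "quasi_kernel V E Q \<longleftrightarrow> independent V E Q \<and> Gamma2 V E Q = V"

definition tournament :: "'v set \<Rightarrow> ('v \<Rightarrow> 'v \<Rightarrow> bool) \<Rightarrow> bool" where
  "tournament V E \<longleftrightarrow> digraph V E \<and>
     (\<forall>x\<in>V. \<forall>y\<in>V. x \<noteq> y \<longrightarrow> (E x y \<longleftrightarrow> \<not> E y x))"

definition regular_digraph :: "'v set \<Rightarrow> ('v \<Rightarrow> 'v \<Rightarrow> bool) \<Rightarrow> nat \<Rightarrow> bool" where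
  "regular_digraph V E k \<longleftrightarrow>
     (\<forall>v\<in>V. card {u\<in>V. E v u} = k \<and> card {u\<in>V. E u v} = k)"

text \<open>Hairy tournament: vertex a of T becomes Inl a; the m new pendant vertices attached
  to a are Inr (a, i) for i < m, each with the single arc Inl a \<rightarrow> Inr (a, i).\<close>
definition hairy_verts :: "'a set \<Rightarrow> nat \<Rightarrow> ('a + 'a \<times> nat) set" where
  "hairy_verts V m = Inl ` V \<union> {Inr (a, i) | a i. a \<in> V \<and> i < m}"

fun hairy_arcs :: "('a \<Rightarrow> 'a \<Rightarrow> bool) \<Rightarrow> ('a + 'a \<times> nat) \<Rightarrow> ('a + 'a \<times> nat) \<Rightarrow> bool" where
  "hairy_arcs E (Inl a) (Inl b) = E a b"
| "hairy_arcs E (Inl a) (Inr (b, i)) = (a = b)"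
| "hairy_arcs E (Inr _) _ = False"

end

theory Submission
  imports Defs
begin

lemma hairy_arcs_iff:
  "hairy_arcs E x y \<longleftrightarrow> (\<exists>a b. x = Inl a \<and> y = Inl b \<and> E a b) \<or> (\<exists>a i. x = Inl a \<and> y = Inr (a, i))"
  by (cases x; cases y) auto

lemma hairy_verts_eq: "hairy_verts V m = Inl ` V \<union> Inr ` (V \<times> {..<m})"
  unfolding hairy_verts_def by auto

lemma card_hairy: "finite V \<Longrightarrow> card (hairy_verts V m) = card V + card V * m"
proof -
  assume f: "finite V"
  have "card (Inl ` V \<union> Inr ` (V \<times> {..<m}) :: ('a + 'a \<times> nat) set) = card (Inl ` V :: ('a + 'a \<times> nat) set) + card (Inr ` (V \<times> {..<m}) :: ('a + 'a \<times> nat) set)"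
    by (rule card_Un_disjoint) (use f in auto)
  also have "\<dots> = card V + card V * m"
    by (simp add: card_image card_cartesian_product)
  finally show ?thesis by (simp add: hairy_verts_eq)
qed

lemma reach2:
  assumes T: "tournament V E" and R: "regular_digraph V E n"
    and v: "v \<in> V" and w: "w \<in> V" and wv: "E w v"
  shows "\<exists>z\<in>V. E v z \<and> E z w"
proof (rule ccontr)
  assume H: "\<not> (\<exists>z\<in>V. E v z \<and> E z w)"
  have dg: "digraph V E" using T unfolding tournament_def by blast
  have tt: "\<And>x y. x \<in> V \<Longrightarrow> y \<in> V \<Longrightarrow> x \<noteq> y \<Longrightarrow> (E x y \<longleftrightarrow> \<not> E y x)"
    using T unfolding tournament_def by blast
  have fin: "finite V" using dg unfolding digraph_def by blast
  have ll: "\<And>x. \<not> E x x" using dg unfolding digraph_def by blast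
  have wnv: "w \<noteq> v" using wv ll by metis
  have sub: "insert v {z\<in>V. E v z} \<subseteq> {z\<in>V. E w z}"
  proof
    fix z assume z: "z \<in> insert v {z\<in>V. E v z}"
    show "z \<in> {z\<in>V. E w z}"
    proof (cases "z = v")
      case True then show ?thesis using wv v by simp
    next
      case False
      then have zV: "z \<in> V" and vz: "E v z" using z by auto
      have zw: "z \<noteq> w"
      proof
        assume "z = w" then show False using tt[OF w v wnv] vz wv by simp
      qed
      have "\<not> E z w" using H zV vz by blast
      then have "E w z" using tt[OF w zV zw[symmetric]] by simp
      then show ?thesis using zV by simp
    qed
  qed
  have c1: "card {z\<in>V. E v z} = n" using R v unfolding regular_digraph_def by blast
  have c2: "card {z\<in>V. E w z} = n" using R w unfolding regular_digraph_def by blast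
  have "v \<notin> {z\<in>V. E v z}" using ll by simp
  moreover have "finite {z\<in>V. E v z}" using fin by simp
  ultimately have c3: "card (insert v {z\<in>V. E v z}) = Suc n" using c1 by simp
  have "finite {z\<in>V. E w z}" using fin by simp
  then have "card (insert v {z\<in>V. E v z}) \<le> card {z\<in>V. E w z}"
    using sub card_mono by blast
  then show False using c2 c3 by simp
qed

theorem mainTheorem6:
  fixes V :: "'a set" and E :: "'a \<Rightarrow> 'a \<Rightarrow> bool" and n :: nat
  assumes "n \<ge> 1"
    and "tournament V E"
    and "card V = 2 * n + 1"
    and "regular_digraph V E n"
  shows "card (hairy_verts V (2 * n + 1)) = (2 * n + 2) * (2 * n + 1)
    \<and> Min {card Q | Q. quasi_kernel (hairy_verts V (2 * n + 1)) (hairy_arcs E) Q}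
        = 1 + n * (2 * n + 1)"
proof -
  define m where "m = 2 * n + 1"
  define H where "H = hairy_verts V m"
  have T: "tournament V E" and R: "regular_digraph V E n" using assms by auto
  have dg: "digraph V E" using T unfolding tournament_def by blast
  have tt: "\<And>x y. x \<in> V \<Longrightarrow> y \<in> V \<Longrightarrow> x \<noteq> y \<Longrightarrow> (E x y \<longleftrightarrow> \<not> E y x)"
    using T unfolding tournament_def by blast
  have fin: "finite V" using dg unfolding digraph_def by blast
  have ll: "\<And>x. \<not> E x x" using dg unfolding digraph_def by blast
  have inV: "\<And>x y. E x y \<Longrightarrow> x \<in> V \<and> y \<in> V" using dg unfolding digraph_def by blast
  have finH: "finite H" unfolding H_def hairy_verts_eq using fin by auto
  have c1: "card H = (2 * n + 2) * (2 * n + 1)"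
    unfolding H_def using card_hairy[OF fin, of m] assms(3) m_def by (simp add: algebra_simps)
  have "V \<noteq> {}" using assms(3) by (metis card.empty add_is_0 one_neq_zero)
  then obtain v where v: "v \<in> V" by blast
  define S :: "'a \<Rightarrow> ('a + 'a \<times> nat) set" where "S = (\<lambda>v. Inr ` ({u\<in>V. E u v} \<times> {..<m}))"
  have cS: "\<And>v. v \<in> V \<Longrightarrow> card (S v) = n * m"
    unfolding S_def using R by (simp add: card_image card_cartesian_product regular_digraph_def)
  have SH: "S v \<subseteq> H" for v unfolding S_def H_def hairy_verts_eq by auto
  define Q0 where "Q0 = insert (Inl v) (S v)"
  have Q0qk: "quasi_kernel H (hairy_arcs E) Q0"
    unfolding quasi_kernel_def
  proof
    show "independent H (hairy_arcs E) Q0"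
      unfolding independent_def Q0_def using SH[of v] v ll
      by (auto simp: H_def hairy_verts_eq S_def hairy_arcs_iff)
    have Q0H: "Q0 \<subseteq> H" unfolding Q0_def using SH[of v] v by (auto simp: H_def hairy_verts_eq)
    show "Gamma2 H (hairy_arcs E) Q0 = H"
    proof
      show "Gamma2 H (hairy_arcs E) Q0 \<subseteq> H"
        unfolding Gamma2_def out_nbrs_def using Q0H by auto
      show "H \<subseteq> Gamma2 H (hairy_arcs E) Q0"
      proof
        fix x assume xH: "x \<in> H"
        show "x \<in> Gamma2 H (hairy_arcs E) Q0"
        proof (cases x)
          case (Inl w)
          then have w: "w \<in> V" using xH by (auto simp: H_def hairy_verts_eq)
          consider "w = v" | "E v w" | "E w v" using tt[of v w] v w by blast
          then show ?thesis
          proof cases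
            case 1 then show ?thesis using Inl by (simp add: Gamma2_def Q0_def)
          next
            case 2 then show ?thesis using Inl xH
              by (auto simp: Gamma2_def Q0_def out_nbrs_def)
          next
            case 3
            then obtain z where z: "z \<in> V" "E v z" "E z w" using reach2[OF T R v w] by blast
            have "Inl z \<in> out_nbrs H (hairy_arcs E) Q0"
              using z by (auto simp: out_nbrs_def Q0_def H_def hairy_verts_eq)
            then have "x \<in> out_nbrs H (hairy_arcs E) (out_nbrs H (hairy_arcs E) Q0)"
              using z xH Inl unfolding out_nbrs_def by (metis (no_types, lifting) hairy_arcs.simps(1) mem_Collect_eq)
            then show ?thesis by (simp add: Gamma2_def)
          qed
        next
          case (Inr p)
          then obtain w i where p: "x = Inr (w, i)" "w \<in> V" "i < m"
            using xH by (auto simp: H_def hairy_verts_eq)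
          consider "w = v" | "E v w" | "E w v" using tt[of v w] v p by blast
          then show ?thesis
          proof cases
            case 1 then show ?thesis using p xH
              by (auto simp: Gamma2_def Q0_def out_nbrs_def)
          next
            case 2
            have "Inl w \<in> out_nbrs H (hairy_arcs E) Q0"
              using 2 p by (auto simp: out_nbrs_def Q0_def H_def hairy_verts_eq)
            then have "x \<in> out_nbrs H (hairy_arcs E) (out_nbrs H (hairy_arcs E) Q0)"
              using xH p unfolding out_nbrs_def by auto
            then show ?thesis by (simp add: Gamma2_def)
          next
            case 3 then show ?thesis using p by (auto simp: Gamma2_def Q0_def S_def)
          qed
        qed
      qed
    qed
  qed
  have cQ0: "card Q0 = 1 + n * m"
  proof -
    have "Inl v \<notin> S v" by (auto simp: S_def)
    moreover have "finite (S v)" using finH SH[of v] finite_subset by blast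
    ultimately show ?thesis using cS[OF v] by (simp add: Q0_def)
  qed
  have lb: "1 + n * m \<le> card Q" if qk: "quasi_kernel H (hairy_arcs E) Q" for Q
  proof -
    have ind: "Q \<subseteq> H" "\<And>x y. x \<in> Q \<Longrightarrow> y \<in> Q \<Longrightarrow> \<not> hairy_arcs E x y"
      and G: "Gamma2 H (hairy_arcs E) Q = H"
      using qk unfolding quasi_kernel_def independent_def by auto
    have "Inl v \<in> H" using v by (simp add: H_def hairy_verts_eq)
    then have "Inl v \<in> Gamma2 H (hairy_arcs E) Q" using G by simp
    then obtain a where a: "Inl a \<in> Q"
      unfolding Gamma2_def out_nbrs_def hairy_arcs_iff by blast
    have aV: "a \<in> V" using a ind(1) by (auto simp: H_def hairy_verts_eq)
    have "S a \<subseteq> Q"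
    proof
      fix y assume y: "y \<in> S a"
      then obtain u i where yu: "y = Inr (u, i)" "u \<in> V" "E u a" "i < m" by (auto simp: S_def)
      have "y \<in> Gamma2 H (hairy_arcs E) Q" using G SH y by blast
      then consider "y \<in> Q" | "Inl u \<in> Q" | b where "Inl b \<in> Q" "E b u"
        unfolding Gamma2_def out_nbrs_def hairy_arcs_iff yu by auto
      then show "y \<in> Q"
      proof cases
        case 2 then show ?thesis using ind(2)[OF 2 a] yu by simp
      next
        case 3
        have bV: "b \<in> V" using inV 3 by blast
        have "b \<noteq> a"
        proof
          assume "b = a"
          then have "E a u" "E u a" "u \<noteq> a" using 3 yu ll by auto
          then show False using tt[OF aV \<open>u \<in> V\<close>] by simp
        qed
        then have "E b a \<or> E a b" using tt[OF aV bV] by blast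
        moreover have "\<not> E b a" using ind(2)[OF 3(1) a] by simp
        moreover have "\<not> E a b" using ind(2)[OF a 3(1)] by simp
        ultimately show ?thesis by blast
      qed
    qed
    then have "insert (Inl a) (S a) \<subseteq> Q" using a by simp
    moreover have "finite Q" using ind(1) finH finite_subset by blast
    ultimately have "card (insert (Inl a) (S a)) \<le> card Q" by (rule card_mono[rotated])
    moreover have "Inl a \<notin> S a" by (auto simp: S_def)
    moreover have "finite (S a)" using finH SH[of a] finite_subset by blast
    ultimately show ?thesis using cS[OF aV] by simp
  qed
  have "Min {card Q | Q. quasi_kernel H (hairy_arcs E) Q} = 1 + n * m"
  proof (rule Min_eqI)
    have "{card Q | Q. quasi_kernel H (hairy_arcs E) Q} \<subseteq> {..card H}"
    proof
      fix k assume "k \<in> {card Q | Q. quasi_kernel H (hairy_arcs E) Q}"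
      then obtain Q where "k = card Q" "Q \<subseteq> H" by (auto simp: quasi_kernel_def independent_def)
      then show "k \<in> {..card H}" using finH card_mono by auto
    qed
    then show "finite {card Q | Q. quasi_kernel H (hairy_arcs E) Q}" using finite_subset by blast
    show "\<And>y. y \<in> {card Q | Q. quasi_kernel H (hairy_arcs E) Q} \<Longrightarrow> 1 + n * m \<le> y"
      using lb by auto
    show "1 + n * m \<in> {card Q | Q. quasi_kernel H (hairy_arcs E) Q}"
      using Q0qk cQ0 by (auto intro!: exI[of _ Q0])
  qed
  then show ?thesis using c1 unfolding H_def m_def by simp
qed

end
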